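(* Let $\mathcal{M}\subseteq\mathbb{S}^n$ be any set. The following are equivalent: (1) $\mathcal{S}(\mathcal{M})$ is rank-one generated; (2) every face of $\mathcal{S}(\mathcal{M})$ is rank-one generated; (3) $\mathcal{S}(\mathcal{M})\cap\mathcal{T}(\mathcal{M}')$ is rank-one generated for every $\mathcal{M}'\subseteq\mathcal{M}$.
   Context: $\mathbb{S}^n$ denotes real symmetric $n\times n$ matrices with $\langle A,B\rangle=\mathrm{tr}(AB)$, $\mathbb{S}^n_+$ the PSD cone. For $\mathcal{M}\subseteq\mathbb{S}^n$, $\mathcal{S}(\mathcal{M})=\{X\in\mathbb{S}^n_+:\langle M,X\rangle\ge0\ \forall M\in\mathcal{M}\}$ and $\mathcal{T}(\mathcal{M})=\{X\in\mathbb{S}^n_+:\langle M,X\rangle=0\ \forall M\in\mathcal{M}\}$ (so $\mathcal{T}(\emptyset)=\mathbb{S}^n_+$). A closed convex cone $\mathcal{S}\subseteq\mathbb{S}^n_+$ is rank-one generated (ROG) if $\mathcal{S}=\mathrm{conv}(\mathcal{S}\cap\{xx^\top:x\in\mathbb{R}^n\})$. *)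

theory Defs
  imports "HOL-Analysis.Analysis"
begin

definition sym_mat :: "real^'n^'n \<Rightarrow> bool" where
  "sym_mat A \<longleftrightarrow> transpose A = A"

definition frob :: "real^'n^'n \<Rightarrow> real^'n^'n \<Rightarrow> real" where
  "frob A B = trace (A ** B)"

definition psd_cone :: "(real^'n^'n) set" where
  "psd_cone = {X. sym_mat X \<and> (\<forall>x. x \<bullet> (X *v x) \<ge> 0)}"

definition outer :: "real^'n \<Rightarrow> real^'n^'n" where
  "outer x = (\<chi> i j. x $ i * x $ j)"

definition S_cone :: "(real^'n^'n) set \<Rightarrow> (real^'n^'n) set" where
  "S_cone \<M> = {X \<in> psd_cone. \<forall>M\<in>\<M>. frob M X \<ge> 0}"

definition T_cone :: "(real^'n^'n) set \<Rightarrow> (real^'n^'n) set" where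
  "T_cone \<M> = {X \<in> psd_cone. \<forall>M\<in>\<M>. frob M X = 0}"

definition ROG :: "(real^'n^'n) set \<Rightarrow> bool" where
  "ROG K \<longleftrightarrow> closed K \<and> convex K \<and> cone K \<and> K \<subseteq> psd_cone \<and>
     K = convex hull (K \<inter> range outer)"

end

theory Submission
  imports Defs
begin

lemma frob_lin: "frob M (a *\<^sub>R X + b *\<^sub>R Y) = a * frob M X + b * frob M Y"
  unfolding frob_def trace_def matrix_matrix_mult_def
  by (simp add: sum_distrib_left sum.distrib algebra_simps)

lemma face_hull_aux:
  fixes K F C :: "'a::euclidean_space set"
  assumes F: "F face_of K" and CK: "C \<subseteq> K" and K: "convex K"
  shows "finite s \<Longrightarrow> s \<subseteq> C \<Longrightarrow> x \<in> F \<Longrightarrow> x \<in> convex hull s \<Longrightarrow> x \<in> convex hull (F \<inter> C)"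
proof (induction s arbitrary: x rule: finite_induct)
  case empty
  then show ?case by simp
next
  case (insert a s)
  have sK: "convex hull s \<subseteq> K" by (intro hull_minimal) (use insert.prems CK K in auto)
  show ?case
  proof (cases "s = {}")
    case True
    then have "x = a" using insert.prems by simp
    then show ?thesis using insert.prems by (simp add: hull_inc)
  next
    case False
    from insert.prems(3) obtain u v y where uv: "0 \<le> u" "0 \<le> v" "u + v = 1" "y \<in> convex hull s"
      and x: "x = u *\<^sub>R a + v *\<^sub>R y"
      using convex_hull_insert[OF False] by blast
    have aK: "a \<in> K" using insert.prems CK by auto
    have yK: "y \<in> K" using uv sK by auto
    have aC: "a \<in> C" using insert.prems by auto
    show ?thesis
    proof (cases "u = 0 \<or> v = 0 \<or> a = y")
      case True
      then consider "u = 0" | "v = 0" | "a = y" by blast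
      then show ?thesis
      proof cases
        case 1
        then have "x = y" using x uv by simp
        then show ?thesis using insert uv by auto
      next
        case 2
        then have "x = a" using x uv by simp
        then show ?thesis using insert.prems aC by (simp add: hull_inc)
      next
        case 3
        then have "x = a" using x uv by (simp add: scaleR_left_distrib[symmetric])
        then show ?thesis using insert.prems aC by (simp add: hull_inc)
      qed
    next
      case False
      have u1: "1 - v = u" using uv by simp
      have "x \<in> open_segment a y"
        unfolding in_segment(2)
      proof (intro conjI)
        show "a \<noteq> y" using False by blast
        show "\<exists>w. 0 < w \<and> w < 1 \<and> x = (1 - w) *\<^sub>R a + w *\<^sub>R y"
          using False uv x u1 by (intro exI[of _ v]) auto
      qed
      then have "a \<in> F" "y \<in> F" using F aK yK insert.prems(2) unfolding face_of_def by blast+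
      then have "y \<in> convex hull (F \<inter> C)" using insert uv by auto
      moreover have "a \<in> convex hull (F \<inter> C)" using \<open>a \<in> F\<close> aC by (simp add: hull_inc)
      ultimately show ?thesis unfolding x using uv
        by (metis convexD convex_convex_hull)
    qed
  qed
qed

lemma face_hull:
  fixes K F C :: "'a::euclidean_space set"
  assumes F: "F face_of K" and CK: "C \<subseteq> K" and K: "K = convex hull C"
  shows "F = convex hull (F \<inter> C)"
proof
  show "F \<subseteq> convex hull (F \<inter> C)"
  proof
    fix x assume xF: "x \<in> F"
    then have "x \<in> convex hull C" using F K face_of_imp_subset by blast
    then obtain s where "finite s" "s \<subseteq> C" "x \<in> convex hull s"
      unfolding caratheodory[of C] by blast
    then show "x \<in> convex hull (F \<inter> C)"
      using face_hull_aux[OF F CK] K xF by (metis convex_convex_hull)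
  qed
  show "convex hull (F \<inter> C) \<subseteq> F"
    by (intro hull_minimal) (auto intro: face_of_imp_convex[OF F])
qed

lemma face_cone:
  fixes K F :: "'a::real_vector set"
  assumes F: "F face_of K" and K: "cone K"
  shows "cone F"
  unfolding cone_def
proof (intro ballI allI impI)
  fix x and c :: real assume xF: "x \<in> F" and c: "0 \<le> c"
  have xK: "x \<in> K" using xF F face_of_imp_subset by blast
  have mem: "d *\<^sub>R x \<in> F \<and> e *\<^sub>R x \<in> F" if "0 \<le> d" "d < 1" "1 < e" "x \<noteq> 0" for d e
  proof -
    have "d *\<^sub>R x \<in> K" "e *\<^sub>R x \<in> K" using K xK that unfolding cone_def by auto
    moreover have "x \<in> open_segment (d *\<^sub>R x) (e *\<^sub>R x)"
      unfolding in_segment(2)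
    proof (intro conjI, goal_cases)
      case 1
      show "d *\<^sub>R x \<noteq> e *\<^sub>R x" using that scaleR_cancel_right[of d x e] by auto
    next
      case 2
      show ?case
      proof (intro exI[of _ "(1 - d) / (e - d)"] conjI)
      show "0 < (1 - d) / (e - d)" using that by simp
      show "(1 - d) / (e - d) < 1" using that by (simp add: divide_simps)
      have ne: "e - d \<noteq> 0" using that by simp
      define t where "t = (1 - d) / (e - d)"
      have ht: "t * (e - d) = 1 - d" unfolding t_def using ne by simp
      have "(1 - t) * d + t * e = d + t * (e - d)" by (simp add: algebra_simps)
      then have "(1 - t) * d + t * e = 1" using ht by simp
      then have "(1 - (1 - d) / (e - d)) * d + (1 - d) / (e - d) * e = 1"
        unfolding t_def .
      then show "x = (1 - (1 - d) / (e - d)) *\<^sub>R d *\<^sub>R x + ((1 - d) / (e - d)) *\<^sub>R e *\<^sub>R x"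
        by (metis scaleR_left_distrib scaleR_one scaleR_scaleR)
      qed
    qed
    ultimately show ?thesis using F xF unfolding face_of_def by blast
  qed
  show "c *\<^sub>R x \<in> F"
  proof (cases "x = 0 \<or> c = 1")
    case True
    then show ?thesis using xF by auto
  next
    case False
    then show ?thesis
    proof (cases "c < 1")
      case True
      then show ?thesis using mem[of c 2] c False by auto
    next
      case False2: False
      then show ?thesis using mem[of 0 c] c False by auto
    qed
  qed
qed

lemma ROG_face:
  assumes R: "ROG K" and F: "F face_of K"
  shows "ROG F"
proof -
  have K: "closed K" "convex K" "cone K" "K \<subseteq> psd_cone" "K = convex hull (K \<inter> range outer)"
    using R unfolding ROG_def by auto
  have "F = convex hull (F \<inter> (K \<inter> range outer))"
    by (rule face_hull[OF F _ K(5)]) auto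
  moreover have "F \<inter> (K \<inter> range outer) = F \<inter> range outer"
    using F face_of_imp_subset by blast
  moreover have "closed F" using face_of_imp_closed K F by blast
  moreover have "convex F" using face_of_imp_convex F by blast
  moreover have "cone F" using face_cone F K by blast
  moreover have "F \<subseteq> psd_cone" using face_of_imp_subset[OF F] K by blast
  ultimately show ?thesis unfolding ROG_def by simp
qed

lemma S_convex: "convex (S_cone \<M>)"
  unfolding convex_def
proof (intro ballI allI impI)
  fix X Y and u v :: real
  assume X: "X \<in> S_cone \<M>" and Y: "Y \<in> S_cone \<M>" and uv: "0 \<le> u" "0 \<le> v" "u + v = 1"
  have "sym_mat (u *\<^sub>R X + v *\<^sub>R Y)" using X Y unfolding S_cone_def psd_cone_def sym_mat_def
    by (simp add: transpose_def vec_eq_iff)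
  moreover have "\<forall>x. x \<bullet> ((u *\<^sub>R X + v *\<^sub>R Y) *v x) \<ge> 0"
  proof
    fix x
    have "(u *\<^sub>R X + v *\<^sub>R Y) *v x = u *\<^sub>R (X *v x) + v *\<^sub>R (Y *v x)"
      by (simp add: matrix_vector_mult_def vec_eq_iff sum_distrib_left sum.distrib algebra_simps)
    moreover have "x \<bullet> (X *v x) \<ge> 0" "x \<bullet> (Y *v x) \<ge> 0" using X Y unfolding S_cone_def psd_cone_def by auto
    ultimately show "x \<bullet> ((u *\<^sub>R X + v *\<^sub>R Y) *v x) \<ge> 0" using uv
      by (simp add: inner_add_right)
  qed
  moreover have "\<forall>M\<in>\<M>. frob M (u *\<^sub>R X + v *\<^sub>R Y) \<ge> 0"
    using X Y uv unfolding S_cone_def by (simp add: frob_lin)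
  ultimately show "u *\<^sub>R X + v *\<^sub>R Y \<in> S_cone \<M>" unfolding S_cone_def psd_cone_def by simp
qed

lemma ST_face: "S_cone \<M> \<inter> T_cone \<M>' face_of S_cone \<M>" if "\<M>' \<subseteq> \<M>"
  unfolding face_of_def
proof (intro conjI ballI impI)
  show "S_cone \<M> \<inter> T_cone \<M>' \<subseteq> S_cone \<M>" by auto
  have "S_cone \<M> \<inter> T_cone \<M>' = S_cone \<M> \<inter> {X. \<forall>M\<in>\<M>'. frob M X = 0}"
    unfolding S_cone_def T_cone_def by auto
  moreover have "convex {X. \<forall>M\<in>\<M>'. frob M X = 0}"
    unfolding convex_def by (simp add: frob_lin)
  ultimately show "convex (S_cone \<M> \<inter> T_cone \<M>')" using convex_Int[OF S_convex[of \<M>]] by simp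
  fix a b x assume a: "a \<in> S_cone \<M>" and b: "b \<in> S_cone \<M>" and x: "x \<in> S_cone \<M> \<inter> T_cone \<M>'"
    and seg: "x \<in> open_segment a b"
  obtain u where u: "0 < u" "u < 1" "x = (1 - u) *\<^sub>R a + u *\<^sub>R b" using seg unfolding in_segment by blast
  have "frob M a = 0 \<and> frob M b = 0" if M: "M \<in> \<M>'" for M
  proof -
    have "frob M a \<ge> 0" "frob M b \<ge> 0" using a b M that \<open>\<M>' \<subseteq> \<M>\<close> unfolding S_cone_def by auto
    moreover have "frob M x = 0" using x M unfolding T_cone_def by auto
    moreover have "frob M x = (1 - u) * frob M a + u * frob M b" using u by (simp add: frob_lin)
    ultimately show ?thesis using u
      by (smt (verit, best) mult_pos_pos zero_le_mult_iff)
  qed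
  then show "a \<in> S_cone \<M> \<inter> T_cone \<M>'" "b \<in> S_cone \<M> \<inter> T_cone \<M>'"
    using a b unfolding S_cone_def T_cone_def by auto
qed

theorem lemma2p10:
  fixes \<M> :: "(real^'n^'n) set"
  assumes "\<forall>M\<in>\<M>. sym_mat M"
  shows "(ROG (S_cone \<M>) \<longleftrightarrow> (\<forall>F. F face_of S_cone \<M> \<longrightarrow> ROG F))
       \<and> (ROG (S_cone \<M>) \<longleftrightarrow> (\<forall>\<M>'. \<M>' \<subseteq> \<M> \<longrightarrow> ROG (S_cone \<M> \<inter> T_cone \<M>')))"
proof -
  have e: "S_cone \<M> \<inter> T_cone {} = S_cone \<M>" unfolding S_cone_def T_cone_def by auto
  show ?thesis
  proof (intro conjI iffI allI impI)
    fix F assume "ROG (S_cone \<M>)" "F face_of S_cone \<M>"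
    then show "ROG F" using ROG_face by blast
  next
    assume "\<forall>F. F face_of S_cone \<M> \<longrightarrow> ROG F"
    then show "ROG (S_cone \<M>)" using face_of_refl[OF S_convex] by blast
  next
    fix \<M>' assume "ROG (S_cone \<M>)" "\<M>' \<subseteq> \<M>"
    then show "ROG (S_cone \<M> \<inter> T_cone \<M>')" using ROG_face ST_face by blast
  next
    assume "\<forall>\<M>'. \<M>' \<subseteq> \<M> \<longrightarrow> ROG (S_cone \<M> \<inter> T_cone \<M>')"
    then show "ROG (S_cone \<M>)" using e by (metis empty_subsetI)
  qed
qed

end
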